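(* Let $n,m\ge1$. An abstract simplicial complex $\mathcal I$ on the vertex set $\Omega$ is affinely implementable (i.e. $\mathcal I=\mathcal I(f)$ for some affine maximizer $f$) if and only if there is a regular subdivision $\mathcal S$ of $(\Delta_{n-1})^m$ such that $F$ is a facet of $\mathcal I$ if and only if $F$ is the vertex set of a maximal cell of $\mathcal S$.
   Context: There are $n$ players and $m$ items. The allocation space is $\Omega=\{A\in\{0,1\}^{n\times m}:\sum_{i\in[n]}A_{i,j}=1\ \forall j\in[m]\}$; row $A_i$ is the bundle of player $i$. $\Omega$ is identified with the vertex set of the product $(\Delta_{n-1})^m$ of $m$ copies of the $(n-1)$-dimensional standard simplex (each column of $A$ being a vertex of $\Delta_{n-1}$). Types: $\theta=(\theta_1,\dots,\theta_n)$ with $\theta_i\in\mathbb R^m$. An allocation function $f:\mathbb R^{n\times m}\to\Omega$ is an affine maximizer if there are nonzero player weights $w_1,\dots,w_n$ and allocation weights $c_A\in\mathbb R$ ($A\in\Omega$) with $f(\theta)\in\arg\max_{A\in\Omega}\{c_A+\sum_i w_i\,\theta_i\cdot A_i\}$ for all $\theta$. Difference sets $Q_A=\mathrm{cl}\{\theta:f(\theta)=A\}$; indifference complex $\mathcal I(f)=\{\mathcal O\subseteq\Omega:\bigcap_{A\in\mathcal O}Q_A\ne\emptyset\}$. Regular subdivision of a finite point set $U$: project the upper faces (outer normal with positive last coordinate) of $\mathrm{conv}\{(u,\lambda(u)):u\in U\}$ for a height function $\lambda:U\to\mathbb R$. *)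

theory Defs
  imports "HOL-Analysis.Analysis"
begin

text \<open>Players are indexed by a finite type 'n (n = CARD('n) >= 1), items by a
finite type 'm (m = CARD('m) >= 1). Matrices in R^{n x m} are elements of
real^'m^'n; row i (the bundle / type of player i) is A $ i.\<close>

definition alloc_space :: "(real^'m^'n) set" where
  "alloc_space = {A. (\<forall>i j. A$i$j = 0 \<or> A$i$j = 1) \<and> (\<forall>j. (\<Sum>i\<in>UNIV. A$i$j) = 1)}"

definition affine_maximizer :: "(real^'m^'n \<Rightarrow> real^'m^'n) \<Rightarrow> bool" where
  "affine_maximizer f \<longleftrightarrow>
     (\<exists>(w::'n \<Rightarrow> real) (c::real^'m^'n \<Rightarrow> real).
        (\<forall>i. w i \<noteq> 0) \<and>
        (\<forall>\<theta>. f \<theta> \<in> alloc_space \<and>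
             (\<forall>B\<in>alloc_space.
                c B + (\<Sum>i\<in>UNIV. w i * (\<theta>$i \<bullet> B$i))
                  \<le> c (f \<theta>) + (\<Sum>i\<in>UNIV. w i * (\<theta>$i \<bullet> f \<theta> $ i)))))"

definition difference_set :: "(real^'m^'n \<Rightarrow> real^'m^'n) \<Rightarrow> real^'m^'n \<Rightarrow> (real^'m^'n) set" where
  "difference_set f A = closure {\<theta>. f \<theta> = A}"

definition indifference_complex :: "(real^'m^'n \<Rightarrow> real^'m^'n) \<Rightarrow> (real^'m^'n) set set" where
  "indifference_complex f =
     {S. S \<subseteq> alloc_space \<and> (\<Inter>A\<in>S. difference_set f A) \<noteq> {}}"

definition simplicial_complex_on :: "'a set \<Rightarrow> 'a set set \<Rightarrow> bool" where
  "simplicial_complex_on V K \<longleftrightarrow>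
     K \<subseteq> Pow V \<and> (\<forall>F\<in>K. \<forall>G. G \<subseteq> F \<longrightarrow> G \<in> K) \<and> (\<forall>v\<in>V. {v} \<in> K)"

definition facets :: "'a set set \<Rightarrow> 'a set set" where
  "facets K = {F\<in>K. \<not> (\<exists>G\<in>K. F \<subset> G)}"

definition lifted_points :: "'a::euclidean_space set \<Rightarrow> ('a \<Rightarrow> real) \<Rightarrow> ('a \<times> real) set" where
  "lifted_points U h = (\<lambda>u. (u, h u)) ` U"

definition upper_faces :: "'a::euclidean_space set \<Rightarrow> ('a \<Rightarrow> real) \<Rightarrow> ('a \<times> real) set set" where
  "upper_faces U h =
     {F. \<exists>\<nu>::'a \<times> real. snd \<nu> > 0 \<and>
          F = {x \<in> convex hull (lifted_points U h).
                 \<forall>y \<in> convex hull (lifted_points U h). \<nu> \<bullet> y \<le> \<nu> \<bullet> x}}"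

definition regular_subdivision :: "'a::euclidean_space set \<Rightarrow> ('a \<Rightarrow> real) \<Rightarrow> 'a set set" where
  "regular_subdivision U h = (\<lambda>F. fst ` F) ` upper_faces U h"

definition maximal_cells :: "'a set set \<Rightarrow> 'a set set" where
  "maximal_cells S = {C\<in>S. \<not> (\<exists>C'\<in>S. C \<subset> C')}"

definition vertex_set :: "'a::real_vector set \<Rightarrow> 'a set" where
  "vertex_set C = {v. v extreme_point_of C}"

end

theory Submission
  imports Defs
begin

definition Mh :: "(real^'m^'n \<Rightarrow> real) \<Rightarrow> real^'m^'n \<Rightarrow> (real^'m^'n) set" where
  "Mh h \<theta> = {A \<in> alloc_space. \<forall>B\<in>alloc_space. h B + \<theta> \<bullet> B \<le> h A + \<theta> \<bullet> A}"

lemma alloc_finite: "finite (alloc_space :: (real^'m^'n) set)"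
proof -
  let ?g = "\<lambda>s::('n\<times>'m) set. (\<chi> i j. if (i,j) \<in> s then 1 else 0) :: real^'m^'n"
  have "alloc_space \<subseteq> ?g ` Pow UNIV"
  proof
    fix A :: "real^'m^'n" assume "A \<in> alloc_space"
    hence "A = ?g {(i,j). A$i$j = 1}"
      unfolding alloc_space_def by (auto simp: vec_eq_iff)
    thus "A \<in> ?g ` Pow UNIV" by blast
  qed
  thus ?thesis by (rule finite_subset) simp
qed

lemma alloc_nonempty: "(alloc_space :: (real^'m^'n) set) \<noteq> {}"
proof -
  obtain i0 :: 'n where True by simp
  let ?A = "(\<chi> i j. if i = i0 then 1 else 0) :: real^'m^'n"
  have "?A \<in> alloc_space" unfolding alloc_space_def by auto
  thus ?thesis by blast
qed

lemma alloc_inner_self: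
  assumes "(A::real^'m^'n) \<in> alloc_space"
  shows "A \<bullet> A = real CARD('m)"
proof -
  have 01: "\<And>i j. A$i$j * A$i$j = A$i$j" using assms unfolding alloc_space_def by auto
  have "A \<bullet> A = (\<Sum>i\<in>UNIV. \<Sum>j\<in>UNIV. A$i$j * A$i$j)" by (simp add: inner_vec_def)
  also have "\<dots> = (\<Sum>i\<in>UNIV. \<Sum>j\<in>UNIV. A$i$j)" by (simp add: 01)
  also have "\<dots> = (\<Sum>j\<in>UNIV. \<Sum>i\<in>UNIV. A$i$j)" by (rule sum.swap)
  also have "\<dots> = (\<Sum>j\<in>(UNIV::'m set). 1)" using assms unfolding alloc_space_def by simp
  finally show ?thesis by simp
qed

lemma alloc_lt:
  assumes "(A::real^'m^'n) \<in> alloc_space" "B \<in> alloc_space" "A \<noteq> B"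
  shows "A \<bullet> B < A \<bullet> A"
proof -
  have "0 < (A - B) \<bullet> (A - B)" using assms(3) by simp
  also have "(A - B) \<bullet> (A - B) = A \<bullet> A - 2 * (A \<bullet> B) + B \<bullet> B"
    by (simp add: inner_diff_left inner_diff_right inner_commute)
  finally show ?thesis using alloc_inner_self[OF assms(1)] alloc_inner_self[OF assms(2)] by simp
qed

lemma not_in_hull:
  assumes "T \<subseteq> alloc_space" "(A::real^'m^'n) \<in> alloc_space" "A \<notin> T"
  shows "A \<notin> convex hull T"
proof -
  have "convex hull T \<subseteq> {y. A \<bullet> y < A \<bullet> A}"
    by (rule hull_minimal) (use assms alloc_lt in \<open>auto simp: convex_halfspace_lt\<close>)
  thus ?thesis by auto
qed

lemma vertex_set_hull:
  assumes "T \<subseteq> (alloc_space::(real^'m^'n) set)"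
  shows "vertex_set (convex hull T) = T"
proof
  show "vertex_set (convex hull T) \<subseteq> T"
    unfolding vertex_set_def using extreme_point_of_convex_hull by auto
  show "T \<subseteq> vertex_set (convex hull T)"
  proof
    fix A assume A: "A \<in> T"
    have fin: "finite (T - {A})" using assms alloc_finite finite_subset by blast
    have "A \<notin> convex hull (T - {A})" using assms A by (intro not_in_hull) auto
    hence "A extreme_point_of convex hull (insert A (T - {A}))"
      using extreme_point_of_convex_hull_insert fin by blast
    moreover have "insert A (T - {A}) = T" using A by auto
    ultimately show "A \<in> vertex_set (convex hull T)" unfolding vertex_set_def by simp
  qed
qed

lemma hull_subset_iff:
  assumes "T \<subseteq> (alloc_space::(real^'m^'n) set)" "T' \<subseteq> alloc_space"
  shows "convex hull T \<subseteq> convex hull T' \<longleftrightarrow> T \<subseteq> T'"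
proof
  assume h: "convex hull T \<subseteq> convex hull T'"
  show "T \<subseteq> T'"
  proof
    fix A assume "A \<in> T"
    hence "A \<in> convex hull T'" using h hull_subset[of T convex] by auto
    moreover have "A \<in> alloc_space" using \<open>A \<in> T\<close> assms(1) by auto
    ultimately show "A \<in> T'" using not_in_hull[OF assms(2), of A] by auto
  qed
qed (rule hull_mono)

lemma hull_psubset_iff:
  assumes "T \<subseteq> (alloc_space::(real^'m^'n) set)" "T' \<subseteq> alloc_space"
  shows "convex hull T \<subset> convex hull T' \<longleftrightarrow> T \<subset> T'"
  using hull_subset_iff[OF assms] hull_subset_iff[OF assms(2,1)] by blast

lemma argmax_hull:
  fixes L :: "'a::real_inner set"
  assumes fin: "finite L" and ne: "L \<noteq> {}"
  shows "{x \<in> convex hull L. \<forall>y\<in>convex hull L. \<nu> \<bullet> y \<le> \<nu> \<bullet> x}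
       = convex hull {p\<in>L. \<forall>q\<in>L. \<nu> \<bullet> q \<le> \<nu> \<bullet> p}"
proof -
  define m where "m = Max ((\<lambda>p. \<nu> \<bullet> p) ` L)"
  have le: "\<forall>q\<in>L. \<nu> \<bullet> q \<le> m" unfolding m_def using fin by auto
  have "m \<in> (\<lambda>p. \<nu> \<bullet> p) ` L" unfolding m_def using fin ne by (intro Max_in) auto
  then obtain p0 where p0: "p0 \<in> L" "\<nu> \<bullet> p0 = m" by auto
  define Lm where "Lm = {p\<in>L. \<forall>q\<in>L. \<nu> \<bullet> q \<le> \<nu> \<bullet> p}"
  have Lm: "Lm = {p\<in>L. \<nu> \<bullet> p = m}"
  proof (intro set_eqI iffI)
    fix p assume "p \<in> Lm"
    hence "p \<in> L" "\<nu> \<bullet> p0 \<le> \<nu> \<bullet> p" using p0(1) unfolding Lm_def by auto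
    thus "p \<in> {p\<in>L. \<nu> \<bullet> p = m}" using le p0(2) by fastforce
  next
    fix p assume "p \<in> {p\<in>L. \<nu> \<bullet> p = m}"
    thus "p \<in> Lm" using le unfolding Lm_def by auto
  qed
  have hullL: "convex hull L \<subseteq> {y. \<nu> \<bullet> y \<le> m}"
    by (rule hull_minimal) (auto simp: le convex_halfspace_le)
  have hullLm: "convex hull Lm \<subseteq> {y. \<nu> \<bullet> y = m}"
    by (rule hull_minimal) (auto simp: Lm convex_hyperplane)
  have LmL: "Lm \<subseteq> L" unfolding Lm by auto
  show ?thesis unfolding Lm_def[symmetric]
  proof
    show "convex hull Lm \<subseteq> {x \<in> convex hull L. \<forall>y\<in>convex hull L. \<nu> \<bullet> y \<le> \<nu> \<bullet> x}"
    proof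
      fix x assume x: "x \<in> convex hull Lm"
      hence "x \<in> convex hull L" using hull_mono[OF LmL] by blast
      moreover have "\<nu> \<bullet> x = m" using x hullLm by blast
      ultimately show "x \<in> {x \<in> convex hull L. \<forall>y\<in>convex hull L. \<nu> \<bullet> y \<le> \<nu> \<bullet> x}"
        using hullL by auto
    qed
    show "{x \<in> convex hull L. \<forall>y\<in>convex hull L. \<nu> \<bullet> y \<le> \<nu> \<bullet> x} \<subseteq> convex hull Lm"
    proof
      fix x assume "x \<in> {x \<in> convex hull L. \<forall>y\<in>convex hull L. \<nu> \<bullet> y \<le> \<nu> \<bullet> x}"
      hence x: "x \<in> convex hull L" "\<forall>y\<in>convex hull L. \<nu> \<bullet> y \<le> \<nu> \<bullet> x" by simp_all
      have "p0 \<in> convex hull L" by (rule hull_inc[OF p0(1)])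
      hence "\<nu> \<bullet> p0 \<le> \<nu> \<bullet> x" using x(2) by blast
      moreover have "\<nu> \<bullet> x \<le> m" using x(1) hullL by blast
      ultimately have xm: "\<nu> \<bullet> x = m" using p0(2) by simp
      from x(1) obtain u where u: "\<forall>p\<in>L. 0 \<le> u p" "sum u L = 1" "(\<Sum>p\<in>L. u p *\<^sub>R p) = x"
        unfolding convex_hull_finite[OF fin] by blast
      have nx: "\<nu> \<bullet> x = (\<Sum>p\<in>L. u p * (\<nu> \<bullet> p))"
        unfolding u(3)[symmetric] by (simp add: inner_sum_right)
      have "(\<Sum>p\<in>L. u p * (m - \<nu> \<bullet> p)) = m * sum u L - (\<Sum>p\<in>L. u p * (\<nu> \<bullet> p))"
        by (simp add: right_diff_distrib sum_subtractf sum_distrib_left mult.commute)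
      hence sz: "(\<Sum>p\<in>L. u p * (m - \<nu> \<bullet> p)) = 0" using u(2) xm nx by simp
      have nn: "\<forall>p\<in>L. 0 \<le> u p * (m - \<nu> \<bullet> p)" using u(1) le by simp
      have z: "\<forall>p\<in>L. u p * (m - \<nu> \<bullet> p) = 0"
        using sum_nonneg_eq_0_iff[OF fin, of "\<lambda>p. u p * (m - \<nu> \<bullet> p)"] nn sz by simp
      have z2: "\<forall>p\<in>L - Lm. u p = 0" using z le unfolding Lm by auto
      have "sum u Lm = sum u L"
        by (rule sum.mono_neutral_left[OF fin LmL]) (use z2 in auto)
      moreover have "(\<Sum>p\<in>Lm. u p *\<^sub>R p) = (\<Sum>p\<in>L. u p *\<^sub>R p)"
        by (rule sum.mono_neutral_left[OF fin LmL]) (use z2 in auto)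
      moreover have "finite Lm" using fin LmL finite_subset by blast
      ultimately show "x \<in> convex hull Lm"
        unfolding convex_hull_finite[OF \<open>finite Lm\<close>] using u LmL
        by (intro CollectI exI[of _ u]) auto
    qed
  qed
qed


lemma fst_hull_lift:
  "fst ` (convex hull ((\<lambda>u. (u, h u)) ` S)) = convex hull (S::'a::real_vector set)"
  by (simp add: convex_hull_linear_image[OF linear_fst] image_image)

lemma face_eq:
  fixes a :: "real^'m^'n"
  assumes t: "t > 0"
  shows "{x \<in> convex hull (lifted_points alloc_space h).
            \<forall>y\<in>convex hull (lifted_points alloc_space h). (a,t) \<bullet> y \<le> (a,t) \<bullet> x}
         = convex hull ((\<lambda>u. (u, h u)) ` Mh h ((1/t) *\<^sub>R a))"
proof -
  have fin: "finite (lifted_points (alloc_space::(real^'m^'n) set) h)"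
    unfolding lifted_points_def by (intro finite_imageI alloc_finite)
  have ne: "lifted_points (alloc_space::(real^'m^'n) set) h \<noteq> {}"
    unfolding lifted_points_def using alloc_nonempty by simp
  have eq: "\<And>B. (a,t) \<bullet> (B, h B) = t * (h B + ((1/t) *\<^sub>R a) \<bullet> B)"
    using t by (simp add: field_simps)
  have "{p \<in> lifted_points alloc_space h. \<forall>q\<in>lifted_points alloc_space h. (a,t) \<bullet> q \<le> (a,t) \<bullet> p}
        = (\<lambda>u. (u, h u)) ` Mh h ((1/t) *\<^sub>R a)"
  proof -
    have iff: "\<And>A B. (a \<bullet> B + t * h B \<le> a \<bullet> A + t * h A) = (h B + a \<bullet> B / t \<le> h A + a \<bullet> A / t)"
    proof -
      fix A B
      have "(h B + a \<bullet> B / t \<le> h A + a \<bullet> A / t) = (t * (h B + a \<bullet> B / t) \<le> t * (h A + a \<bullet> A / t))"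
        using t by simp
      also have "\<dots> = (a \<bullet> B + t * h B \<le> a \<bullet> A + t * h A)"
        using t by (simp add: distrib_left ac_simps)
      finally show "(a \<bullet> B + t * h B \<le> a \<bullet> A + t * h A) = (h B + a \<bullet> B / t \<le> h A + a \<bullet> A / t)" by simp
    qed
    show ?thesis unfolding lifted_points_def Mh_def by (auto simp: iff)
  qed
  thus ?thesis using argmax_hull[OF fin ne, of "(a,t)"] by simp
qed

lemma cells:
  "regular_subdivision (alloc_space::(real^'m^'n) set) h = range (\<lambda>\<theta>. convex hull (Mh h \<theta>))"
proof
  show "regular_subdivision alloc_space h \<subseteq> range (\<lambda>\<theta>. convex hull (Mh h \<theta>))"
  proof
    fix C assume "C \<in> regular_subdivision (alloc_space::(real^'m^'n) set) h"
    then obtain F \<nu> where C: "C = fst ` F" and \<nu>: "snd \<nu> > 0"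
      and F: "F = {x \<in> convex hull (lifted_points alloc_space h).
                 \<forall>y \<in> convex hull (lifted_points alloc_space h). \<nu> \<bullet> y \<le> \<nu> \<bullet> x}"
      unfolding regular_subdivision_def upper_faces_def by auto
    obtain a t where at: "\<nu> = (a,t)" by (cases \<nu>)
    have "F = convex hull ((\<lambda>u. (u, h u)) ` Mh h ((1/t) *\<^sub>R a))"
      unfolding F at using face_eq[where t=t and a=a and h=h] \<nu> at by simp
    hence "C = convex hull (Mh h ((1/t) *\<^sub>R a))" using C fst_hull_lift by simp
    thus "C \<in> range (\<lambda>\<theta>. convex hull (Mh h \<theta>))" by blast
  qed
  show "range (\<lambda>\<theta>. convex hull (Mh h \<theta>)) \<subseteq> regular_subdivision alloc_space h"
  proof
    fix C assume "C \<in> range (\<lambda>\<theta>. convex hull (Mh h \<theta>::(real^'m^'n) set))"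
    then obtain \<theta> where C: "C = convex hull (Mh h \<theta>)" by auto
    define F where "F = {x \<in> convex hull (lifted_points (alloc_space::(real^'m^'n) set) h).
                 \<forall>y \<in> convex hull (lifted_points alloc_space h). (\<theta>,1::real) \<bullet> y \<le> (\<theta>,1) \<bullet> x}"
    have "F \<in> upper_faces alloc_space h"
      unfolding upper_faces_def F_def by (intro CollectI exI[of _ "(\<theta>,1::real)"]) simp
    moreover have "F = convex hull ((\<lambda>u. (u, h u)) ` Mh h \<theta>)"
      unfolding F_def using face_eq[where t=1 and a=\<theta> and h=h] by simp
    hence "C = fst ` F" using C by (simp add: fst_hull_lift)
    ultimately show "C \<in> regular_subdivision alloc_space h"
      unfolding regular_subdivision_def by blast
  qed
qed

lemma Mh_sub: "Mh h \<theta> \<subseteq> alloc_space"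
  unfolding Mh_def by auto

lemma rhs_iff:
  "(\<exists>C \<in> maximal_cells (regular_subdivision (alloc_space::(real^'m^'n) set) h). F = vertex_set C)
   \<longleftrightarrow> F \<in> {T \<in> range (Mh h). \<not> (\<exists>T'\<in>range (Mh h). T \<subset> T')}"
proof
  assume "\<exists>C \<in> maximal_cells (regular_subdivision (alloc_space::(real^'m^'n) set) h). F = vertex_set C"
  then obtain C where C: "C \<in> maximal_cells (regular_subdivision (alloc_space::(real^'m^'n) set) h)"
    and FC: "F = vertex_set C" by blast
  have C1: "C \<in> range (\<lambda>\<theta>. convex hull (Mh h \<theta>))"
    and C2: "\<forall>C'\<in>range (\<lambda>\<theta>. convex hull (Mh h \<theta>)). \<not> C \<subset> C'"
    using C unfolding maximal_cells_def cells by simp_all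
  from C1 obtain \<theta> where C\<theta>: "C = convex hull (Mh h \<theta>)" by blast
  have F': "F = Mh h \<theta>" using FC C\<theta> vertex_set_hull[OF Mh_sub] by simp
  have "\<not> Mh h \<theta> \<subset> Mh h \<theta>'" for \<theta>'
  proof
    assume "Mh h \<theta> \<subset> Mh h \<theta>'"
    hence "convex hull (Mh h \<theta>) \<subset> convex hull (Mh h \<theta>')"
      using hull_psubset_iff[OF Mh_sub[of h \<theta>] Mh_sub[of h \<theta>']] by simp
    thus False using C2 C\<theta> by simp
  qed
  thus "F \<in> {T \<in> range (Mh h). \<not> (\<exists>T'\<in>range (Mh h). T \<subset> T')}" using F' by auto
next
  assume "F \<in> {T \<in> range (Mh h). \<not> (\<exists>T'\<in>range (Mh h). T \<subset> (T'::(real^'m^'n) set))}"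
  then obtain \<theta> where F: "F = Mh h \<theta>" and max: "\<And>\<theta>'. \<not> Mh h \<theta> \<subset> Mh h \<theta>'" by auto
  have "\<not> convex hull (Mh h \<theta>) \<subset> convex hull (Mh h \<theta>')" for \<theta>'
    using max[of \<theta>'] hull_psubset_iff[OF Mh_sub[of h \<theta>] Mh_sub[of h \<theta>']] by simp
  hence "\<forall>C'\<in>range (\<lambda>\<theta>. convex hull (Mh h \<theta>)). \<not> convex hull (Mh h \<theta>) \<subset> C'" by auto
  hence "convex hull (Mh h \<theta>) \<in> maximal_cells (regular_subdivision alloc_space h)"
    unfolding maximal_cells_def cells by simp
  moreover have "F = vertex_set (convex hull (Mh h \<theta>))" using F by (simp add: vertex_set_hull[OF Mh_sub])
  ultimately show "\<exists>C \<in> maximal_cells (regular_subdivision (alloc_space::(real^'m^'n) set) h). F = vertex_set C"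
    by blast
qed


lemma wsum_eq:
  "(\<Sum>i\<in>UNIV. w i * (\<theta>$i \<bullet> B$i)) = (\<chi> i. w i *\<^sub>R \<theta>$i) \<bullet> (B::real^'m^'n)"
  by (simp add: inner_vec_def sum_distrib_left mult.assoc mult.left_commute)

lemma wsum_eq2:
  "(\<Sum>i\<in>UNIV. w i * (\<theta>$i \<bullet> B$i)) = \<theta> \<bullet> (\<chi> i. w i *\<^sub>R B$i :: real^'m^'n)"
  by (simp add: inner_vec_def sum_distrib_left mult.assoc mult.left_commute)

lemma ic:
  fixes f :: "real^'m^'n \<Rightarrow> real^'m^'n"
  assumes w: "\<forall>i. w i \<noteq> 0"
  and fp: "\<forall>\<theta>. f \<theta> \<in> alloc_space \<and>
             (\<forall>B\<in>alloc_space.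
                c B + (\<Sum>i\<in>UNIV. w i * (\<theta>$i \<bullet> B$i))
                  \<le> c (f \<theta>) + (\<Sum>i\<in>UNIV. w i * (\<theta>$i \<bullet> f \<theta> $ i)))"
  shows "indifference_complex f = {S. \<exists>\<theta>. S \<subseteq> Mh c \<theta>}"
proof -
  define T :: "real^'m^'n \<Rightarrow> real^'m^'n" where "T \<theta> = (\<chi> i. w i *\<^sub>R \<theta>$i)" for \<theta>
  define W :: "real^'m^'n \<Rightarrow> real^'m^'n" where "W B = (\<chi> i. w i *\<^sub>R B$i)" for B
  have TW: "T \<theta> \<bullet> B = \<theta> \<bullet> W B" for \<theta> B
    unfolding T_def W_def using wsum_eq[of w \<theta> B] wsum_eq2[of w \<theta> B] by simp
  have fp': "f \<theta> \<in> alloc_space \<and> (\<forall>B\<in>alloc_space. c B + T \<theta> \<bullet> B \<le> c (f \<theta>) + T \<theta> \<bullet> f \<theta>)" for \<theta>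
    using fp unfolding T_def wsum_eq by blast
  have a: "closure {\<theta>. f \<theta> = A} \<subseteq> {\<theta>. A \<in> Mh c (T \<theta>)}" if A: "A \<in> alloc_space" for A
  proof (rule closure_minimal)
    show "{\<theta>. f \<theta> = A} \<subseteq> {\<theta>. A \<in> Mh c (T \<theta>)}" using fp' unfolding Mh_def by auto
    have eq: "{\<theta>. A \<in> Mh c (T \<theta>)} = (\<Inter>B\<in>alloc_space. {\<theta>. c B + \<theta> \<bullet> W B \<le> c A + \<theta> \<bullet> W A})"
      using A unfolding Mh_def TW by auto
    show "closed {\<theta>. A \<in> Mh c (T \<theta>)}" unfolding eq
      by (intro closed_INT ballI closed_Collect_le continuous_intros)
  qed
  have b: "\<theta>0 \<in> closure {\<theta>. f \<theta> = A}" if A: "A \<in> Mh c (T \<theta>0)" for A \<theta>0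
  proof -
    have AO: "A \<in> alloc_space" and Amax: "\<forall>B\<in>alloc_space. c B + T \<theta>0 \<bullet> B \<le> c A + T \<theta>0 \<bullet> A"
      using A unfolding Mh_def by auto
    define D :: "real^'m^'n" where "D = (\<chi> i. (1 / w i) *\<^sub>R A$i)"
    have TD: "T (\<theta>0 + e *\<^sub>R D) = T \<theta>0 + e *\<^sub>R A" for e
      unfolding T_def D_def using w by (simp add: vec_eq_iff scaleR_add_right)
    have fA: "f (\<theta>0 + e *\<^sub>R D) = A" if e: "e > 0" for e
    proof (rule ccontr)
      let ?B = "f (\<theta>0 + e *\<^sub>R D)"
      assume ne: "?B \<noteq> A"
      have BO: "?B \<in> alloc_space" using fp' by blast
      have "c ?B + T \<theta>0 \<bullet> ?B \<le> c A + T \<theta>0 \<bullet> A" using Amax BO by blast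
      moreover have "A \<bullet> ?B < A \<bullet> A" using alloc_lt[OF AO BO] ne by auto
      moreover have "e * (A \<bullet> ?B) < e * (A \<bullet> A)" using calculation(2) e by simp
      ultimately have "c ?B + (T \<theta>0 \<bullet> ?B + e * (A \<bullet> ?B)) < c A + (T \<theta>0 \<bullet> A + e * (A \<bullet> A))"
        by linarith
      hence "c ?B + T (\<theta>0 + e *\<^sub>R D) \<bullet> ?B < c A + T (\<theta>0 + e *\<^sub>R D) \<bullet> A"
        unfolding TD by (simp add: inner_add_left inner_commute[of ?B A])
      moreover have "c A + T (\<theta>0 + e *\<^sub>R D) \<bullet> A \<le> c ?B + T (\<theta>0 + e *\<^sub>R D) \<bullet> ?B"
        using fp' AO by blast
      ultimately show False by simp
    qed
    show ?thesis unfolding closure_approachable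
    proof (intro allI impI)
      fix \<epsilon> :: real assume \<epsilon>: "\<epsilon> > 0"
      define e where "e = \<epsilon> / (norm D + 1)"
      have e: "e > 0" unfolding e_def using \<epsilon> by (simp add: add_nonneg_pos)
      have "e * norm D < \<epsilon>"
      proof -
        have "e * norm D < e * (norm D + 1)" using e by simp
        also have "\<dots> = \<epsilon>"
        proof -
          have "norm D + 1 \<noteq> 0" using norm_ge_zero[of D] by linarith
          thus "e * (norm D + 1) = \<epsilon>" unfolding e_def by simp
        qed
        finally show ?thesis .
      qed
      hence "dist (\<theta>0 + e *\<^sub>R D) \<theta>0 < \<epsilon>" using e by (simp add: dist_norm)
      thus "\<exists>y\<in>{\<theta>. f \<theta> = A}. dist y \<theta>0 < \<epsilon>" using fA[OF e] by blast
    qed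
  qed
  show ?thesis
  proof (intro set_eqI iffI)
    fix S assume "S \<in> indifference_complex f"
    hence S: "S \<subseteq> alloc_space" "(\<Inter>A\<in>S. closure {\<theta>. f \<theta> = A}) \<noteq> {}"
      unfolding indifference_complex_def difference_set_def by auto
    then obtain \<theta>0 where "\<theta>0 \<in> (\<Inter>A\<in>S. closure {\<theta>. f \<theta> = A})" by blast
    hence "\<forall>A\<in>S. A \<in> Mh c (T \<theta>0)" using a S(1) by blast
    thus "S \<in> {S. \<exists>\<theta>. S \<subseteq> Mh c \<theta>}" by blast
  next
    fix S assume "S \<in> {S. \<exists>\<theta>. S \<subseteq> Mh c \<theta>}"
    then obtain \<theta>1 where S: "S \<subseteq> Mh c \<theta>1" by blast
    define \<theta>0 :: "real^'m^'n" where "\<theta>0 = (\<chi> i. (1 / w i) *\<^sub>R \<theta>1$i)"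
    have "T \<theta>0 = \<theta>1" unfolding T_def \<theta>0_def using w by (simp add: vec_eq_iff)
    hence "\<forall>A\<in>S. \<theta>0 \<in> closure {\<theta>. f \<theta> = A}" using S b by auto
    moreover have "S \<subseteq> alloc_space" using S Mh_sub by blast
    ultimately show "S \<in> indifference_complex f"
      unfolding indifference_complex_def difference_set_def by blast
  qed
qed


lemma facets_down:
  "facets {S. \<exists>T\<in>\<F>. S \<subseteq> T} = {T\<in>\<F>. \<not> (\<exists>T'\<in>\<F>. T \<subset> T')}"
proof (intro set_eqI iffI)
  fix F assume "F \<in> facets {S. \<exists>T\<in>\<F>. S \<subseteq> T}"
  hence F: "\<exists>T\<in>\<F>. F \<subseteq> T" and mx: "\<forall>G. (\<exists>T\<in>\<F>. G \<subseteq> T) \<longrightarrow> \<not> F \<subset> G"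
    unfolding facets_def by auto
  from F obtain T where T: "T \<in> \<F>" "F \<subseteq> T" by blast
  have "F = T" using mx T by blast
  moreover have "\<not> (\<exists>T'\<in>\<F>. T \<subset> T')" using mx \<open>F = T\<close> by blast
  ultimately show "F \<in> {T\<in>\<F>. \<not> (\<exists>T'\<in>\<F>. T \<subset> T')}" using T by blast
next
  fix F assume "F \<in> {T\<in>\<F>. \<not> (\<exists>T'\<in>\<F>. T \<subset> T')}"
  hence F: "F \<in> \<F>" and mx: "\<forall>T'\<in>\<F>. \<not> F \<subset> T'" by auto
  have "\<not> F \<subset> G" if "T \<in> \<F>" "G \<subseteq> T" for G T using mx that by blast
  thus "F \<in> facets {S. \<exists>T\<in>\<F>. S \<subseteq> T}" unfolding facets_def using F by blast
qed

lemma Mh_ne: "Mh h (\<theta>::real^'m^'n) \<noteq> {}"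
proof -
  let ?g = "\<lambda>A::real^'m^'n. h A + \<theta> \<bullet> A"
  define m where "m = Max (?g ` alloc_space)"
  have le: "\<forall>B\<in>alloc_space. ?g B \<le> m" unfolding m_def
    by (intro ballI Max_ge finite_imageI alloc_finite imageI)
  have "m \<in> ?g ` alloc_space" unfolding m_def using alloc_finite alloc_nonempty by (intro Max_in) auto
  then obtain A where "A \<in> alloc_space" "?g A = m" by auto
  hence "A \<in> Mh h \<theta>" using le unfolding Mh_def by auto
  thus ?thesis by blast
qed

lemma down_eq: "{S. \<exists>\<theta>. S \<subseteq> Mh h \<theta>} = {S. \<exists>T\<in>range (Mh h). S \<subseteq> T}"
  by auto

theorem mainTheorem6:
  fixes I :: "(real^'m^'n) set set"
  assumes "simplicial_complex_on (alloc_space :: (real^'m^'n) set) I"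
  shows "(\<exists>f::real^'m^'n \<Rightarrow> real^'m^'n. affine_maximizer f \<and> I = indifference_complex f)
     \<longleftrightarrow> (\<exists>h::real^'m^'n \<Rightarrow> real.
            \<forall>F. F \<in> facets I \<longleftrightarrow>
                (\<exists>C \<in> maximal_cells (regular_subdivision alloc_space h). F = vertex_set C))"
proof
  assume "\<exists>f::real^'m^'n \<Rightarrow> real^'m^'n. affine_maximizer f \<and> I = indifference_complex f"
  then obtain f :: "real^'m^'n \<Rightarrow> real^'m^'n" and w c where
    w: "\<forall>i. w i \<noteq> 0" and
    fp: "\<forall>\<theta>. f \<theta> \<in> alloc_space \<and>
             (\<forall>B\<in>alloc_space.
                c B + (\<Sum>i\<in>UNIV. w i * (\<theta>$i \<bullet> B$i))
                  \<le> c (f \<theta>) + (\<Sum>i\<in>UNIV. w i * (\<theta>$i \<bullet> f \<theta> $ i)))"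
    and I: "I = indifference_complex f"
    unfolding affine_maximizer_def by blast
  have Ieq: "I = {S. \<exists>T\<in>range (Mh c). S \<subseteq> T}" using I ic[OF w fp] down_eq by simp
  have "facets I = {T\<in>range (Mh c). \<not> (\<exists>T'\<in>range (Mh c). T \<subset> T')}"
    unfolding Ieq by (rule facets_down)
  thus "\<exists>h::real^'m^'n \<Rightarrow> real. \<forall>F. F \<in> facets I \<longleftrightarrow>
                (\<exists>C \<in> maximal_cells (regular_subdivision alloc_space h). F = vertex_set C)"
  proof (intro exI[of _ c] allI)
    fix F
    show "F \<in> facets I \<longleftrightarrow> (\<exists>C \<in> maximal_cells (regular_subdivision alloc_space c). F = vertex_set C)"
      using rhs_iff[where h=c and F=F] \<open>facets I = _\<close> by simp
  qed
next
  assume "\<exists>h::real^'m^'n \<Rightarrow> real. \<forall>F. F \<in> facets I \<longleftrightarrow>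
                (\<exists>C \<in> maximal_cells (regular_subdivision alloc_space h). F = vertex_set C)"
  then obtain h :: "real^'m^'n \<Rightarrow> real" where
    hF0: "\<forall>F. F \<in> facets I \<longleftrightarrow> (\<exists>C \<in> maximal_cells (regular_subdivision alloc_space h). F = vertex_set C)"
    by blast
  have hF: "\<forall>F. F \<in> facets I \<longleftrightarrow> F \<in> {T\<in>range (Mh h). \<not> (\<exists>T'\<in>range (Mh h). T \<subset> T')}"
  proof
    fix F
    have "F \<in> facets I \<longleftrightarrow> (\<exists>C \<in> maximal_cells (regular_subdivision alloc_space h). F = vertex_set C)"
      using hF0 by blast
    also have "\<dots> \<longleftrightarrow> F \<in> {T\<in>range (Mh h). \<not> (\<exists>T'\<in>range (Mh h). T \<subset> T')}"
      by (rule rhs_iff)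
    finally show "F \<in> facets I \<longleftrightarrow> F \<in> {T\<in>range (Mh h). \<not> (\<exists>T'\<in>range (Mh h). T \<subset> T')}" .
  qed
  define f :: "real^'m^'n \<Rightarrow> real^'m^'n" where "f \<theta> = (SOME A. A \<in> Mh h \<theta>)" for \<theta>
  have fM: "f \<theta> \<in> Mh h \<theta>" for \<theta> unfolding f_def using Mh_ne[of h \<theta>] some_in_eq by blast
  have one: "(\<Sum>i\<in>UNIV. (\<lambda>_. 1::real) i * (\<theta>$i \<bullet> B$i)) = \<theta> \<bullet> B" for \<theta> B :: "real^'m^'n"
    by (simp add: inner_vec_def)
  have fp: "\<forall>\<theta>. f \<theta> \<in> alloc_space \<and>
             (\<forall>B\<in>alloc_space.
                h B + (\<Sum>i\<in>UNIV. (\<lambda>_. 1::real) i * (\<theta>$i \<bullet> B$i))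
                  \<le> h (f \<theta>) + (\<Sum>i\<in>UNIV. (\<lambda>_. 1::real) i * (\<theta>$i \<bullet> f \<theta> $ i)))"
    unfolding one using fM unfolding Mh_def by blast
  have am: "affine_maximizer f"
    unfolding affine_maximizer_def
    by (rule exI[of _ "\<lambda>_. 1::real"], rule exI[of _ h]) (use fp in simp)
  have icf: "indifference_complex f = {S. \<exists>T\<in>range (Mh h). S \<subseteq> T}"
    using ic[of "\<lambda>_. 1::real" f h] fp down_eq by simp
  have sc: "I \<subseteq> Pow alloc_space" "\<forall>F\<in>I. \<forall>G. G \<subseteq> F \<longrightarrow> G \<in> I"
    using assms unfolding simplicial_complex_on_def by auto
  have finI: "finite I" by (rule finite_subset[OF sc(1)]) (simp add: alloc_finite)
  have finR: "finite (range (Mh h))"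
    by (rule finite_subset[of _ "Pow alloc_space"]) (auto simp: alloc_finite dest: subsetD[OF Mh_sub])
  have "I = {S. \<exists>T\<in>range (Mh h). S \<subseteq> T}"
  proof (intro set_eqI iffI)
    fix S assume S: "S \<in> I"
    obtain F where F: "F \<in> I" "S \<subseteq> F" "\<forall>b\<in>I. F \<subseteq> b \<longrightarrow> F = b"
      using finite_has_maximal2[OF finI S] by blast
    have "F \<in> facets I" unfolding facets_def using F by blast
    hence "F \<in> range (Mh h)" using hF by blast
    thus "S \<in> {S. \<exists>T\<in>range (Mh h). S \<subseteq> T}" using F(2) by blast
  next
    fix S assume "S \<in> {S. \<exists>T\<in>range (Mh h). S \<subseteq> T}"
    then obtain T0 where T0: "T0 \<in> range (Mh h)" "S \<subseteq> T0" by blast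
    obtain T where T: "T \<in> range (Mh h)" "T0 \<subseteq> T" "\<forall>b\<in>range (Mh h). T \<subseteq> b \<longrightarrow> T = b"
      using finite_has_maximal2[OF finR T0(1)] by blast
    have "T \<in> {T\<in>range (Mh h). \<not> (\<exists>T'\<in>range (Mh h). T \<subset> T')}" using T by blast
    hence "T \<in> facets I" using hF by blast
    hence "T \<in> I" unfolding facets_def by blast
    thus "S \<in> I" using sc(2) T0(2) T(2) by blast
  qed
  thus "\<exists>f::real^'m^'n \<Rightarrow> real^'m^'n. affine_maximizer f \<and> I = indifference_complex f"
    using am icf by blast
qed

end
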